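(* Consider one iteration of noisy Gallager-B decoding on a $(d_v,d_c)$-regular LDPC code with $d_v\ge4$, under the density-evolution assumptions that the correct codeword is all-zero, the decoding neighborhood is cycle-free, and all incoming variable-to-check messages are independently in error with probability $p_0$. Let $d_T\ge2$ be an integer, $d=\lceil\frac{d_v-1}{2}\rceil$, $$p_{\text{thr}}=\binom{d_v-1}{\lfloor\frac{d_v-1}{2}\rfloor}^{-\frac{1}{d-1}}d_c^{-\frac{d}{d-1}}d_T^{-\frac{1}{d-1}}(d_T+1)^{-\frac{d}{d-1}},$$ and suppose $p_{\text{maj}}\le p_{\text{thr}}$, $p_{\text{xor}}\le\frac{d_T+1}{d_c}p_{\text{thr}}$, $p_{\text{and}}\le\frac{d_T+1}{d_T}p_{\text{thr}}$. Let $p_{\text{reg}}=p_{\text{xor}}+(d_T+1)p_{\text{thr}}$. If $p_0<p_{\text{reg}}$, then the bit error probability $p_e^{\text{dec}}$ of each variable-to-check message after one iteration satisfies $$p_{\text{maj}}<p_e^{\text{dec}}\le p_{\text{maj}}+\frac{1}{d_T}p_{\text{thr}}.$$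
   Context: Noisy Gallager-B iteration: for each Tanner-graph edge $(v,c)$, the check-to-variable message $m_{c\to v}=\bigoplus_{v'\in\mathcal N(c)\setminus v}m_{v'\to c}$ is computed by an XOR gate whose output is flipped independently with probability $p_{\text{xor}}$; the new variable-to-check message $m_{v\to c}$ equals $x$ if at least $b=\lfloor\frac{d_v+1}{2}\rfloor$ of the messages $m_{c'\to v}$, $c'\in\mathcal N(v)\setminus c$, equal $x$, and a uniformly random bit otherwise, and is computed by a majority gate whose output is flipped independently with probability $p_{\text{maj}}$ (all gate errors independent, all probabilities $<1/2$). $p_{\text{and}}$ denotes the error probability of AND gates (appearing only in the hypotheses). *)

theory Defs
  imports "HOL-Probability.Probability"
begin

text \<open>Density-evolution model of one noisy Gallager-B iteration (all-zero codeword,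
cycle-free neighbourhood). A boolean value True means "the message is in error".\<close>

definition check_msg_err :: "nat \<Rightarrow> real \<Rightarrow> real \<Rightarrow> bool pmf" where
  "check_msg_err dc pxor p0 =
     do { k \<leftarrow> binomial_pmf (dc - 1) p0;
          f \<leftarrow> bernoulli_pmf pxor;
          return_pmf (odd k \<noteq> f) }"

definition var_msg_err :: "nat \<Rightarrow> real \<Rightarrow> real \<Rightarrow> bool pmf" where
  "var_msg_err dv pmaj pc =
     do { k \<leftarrow> binomial_pmf (dv - 1) pc;
          r \<leftarrow> bernoulli_pmf (1/2);
          f \<leftarrow> bernoulli_pmf pmaj;
          let b = (dv + 1) div 2;
          let pre = (if k \<ge> b then True else if (dv - 1) - k \<ge> b then False else r);
          return_pmf (pre \<noteq> f) }"

definition pe_dec :: "nat \<Rightarrow> nat \<Rightarrow> real \<Rightarrow> real \<Rightarrow> real \<Rightarrow> real" where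
  "pe_dec dv dc pxor pmaj p0 =
     pmf (var_msg_err dv pmaj (pmf (check_msg_err dc pxor p0) True)) True"

definition p_thr :: "nat \<Rightarrow> nat \<Rightarrow> nat \<Rightarrow> real" where
  "p_thr dv dc dT =
     (let d = nat \<lceil>(real dv - 1) / 2\<rceil> in
        real ((dv - 1) choose ((dv - 1) div 2)) powr (- 1 / (real d - 1))
      * real dc powr (- real d / (real d - 1))
      * real dT powr (- 1 / (real d - 1))
      * (real dT + 1) powr (- real d / (real d - 1)))"

end

theory Submission
  imports Defs
begin

lemma pow_powr: "0 < a \<Longrightarrow> (a powr r) ^ n = a powr (r * real n)"
  by (metis powr_powr powr_realpow powr_gt_zero)

lemma pthr_alg:
  fixes C x t s :: real and d :: nat
  assumes "C > 0" "x > 0" "t > 0" "s > 0" "d \<ge> 2"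
  defines "P \<equiv> C powr (- 1 / (real d - 1)) * x powr (- real d / (real d - 1))
      * t powr (- 1 / (real d - 1)) * s powr (- real d / (real d - 1))"
  shows "C * x^d * s^d * P^d = P / t" and "P > 0"
proof -
  have e: "real (d - 1) = real d - 1" "real d - 1 \<noteq> 0" using assms(5) by auto
  have "P ^ (d-1) = C powr (-1) * x powr (- real d) * t powr (-1) * s powr (- real d)"
    unfolding P_def power_mult_distrib using assms e
    by (simp add: pow_powr)
  also have "\<dots> = 1 / (C * x^d * t * s^d)"
    using assms by (simp add: powr_minus powr_realpow divide_simps)
  finally have h: "P ^ (d-1) = 1 / (C * x^d * t * s^d)" .
  have "P^d = P * P^(d-1)" using assms(5)
    by (metis Suc_diff_1 less_le_trans pos2 power_Suc)
  then show "C * x^d * s^d * P^d = P / t" using h assms by (simp add: field_simps)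
  show "P > 0" unfolding P_def using assms by simp
qed

lemma binsum: "0 \<le> p \<Longrightarrow> p \<le> 1 \<Longrightarrow> (\<Sum>k\<le>n. real (n choose k) * p^k * (1-p)^(n-k)) = 1"
  using binomial_ring[of p "1-p" n] by simp

lemma tail:
  fixes p :: real
  assumes "0 \<le> p" "p \<le> 1" "d \<le> m"
  shows "(\<Sum>k\<le>m. (if d \<le> k then real (m choose k) * p^k * (1-p)^(m-k) else 0)) \<le> real (m choose d) * p^d"
proof -
  have "(\<Sum>k\<le>m. (if d \<le> k then real (m choose k) * p^k * (1-p)^(m-k) else 0))
      = (\<Sum>k\<in>{d..m}. real (m choose k) * p^k * (1-p)^(m-k))"
    by (rule sum.mono_neutral_cong_right) auto
  also have "\<dots> \<le> (\<Sum>k\<in>{d..m}. real (m choose d) * p^d * (real ((m-d) choose (k-d)) * p^(k-d) * (1-p)^(m-k)))"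
  proof (rule sum_mono)
    fix k assume k: "k \<in> {d..m}"
    have c: "real (m choose k) * real (k choose d) = real (m choose d) * real ((m-d) choose (k-d))"
      using choose_mult[of d k m] k by (metis atLeastAtMost_iff of_nat_mult)
    have "real (k choose d) \<ge> 1" using k by (simp add: Suc_leI zero_less_binomial)
    then have "real (m choose k) \<le> real (m choose k) * real (k choose d)"
      by (simp add: mult_le_cancel_left1)
    then have i1: "real (m choose k) \<le> real (m choose d) * real ((m-d) choose (k-d))"
      using c by simp
    have i2: "p^k = p^d * p^(k-d)" using k by (simp add: power_add[symmetric])
    show "real (m choose k) * p^k * (1-p)^(m-k) \<le> real (m choose d) * p^d * (real ((m-d) choose (k-d)) * p^(k-d) * (1-p)^(m-k))"
    proof -
      have nn: "0 \<le> p^k * (1-p)^(m-k)" using assms by simp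
      from mult_right_mono[OF i1 nn] i2 show ?thesis
        by (simp add: algebra_simps)
    qed
  qed
  also have "\<dots> = real (m choose d) * p^d * (\<Sum>k\<in>{d..m}. real ((m-d) choose (k-d)) * p^(k-d) * (1-p)^(m-k))"
    by (simp add: sum_distrib_left)
  also have "(\<Sum>k\<in>{d..m}. real ((m-d) choose (k-d)) * p^(k-d) * (1-p)^(m-k))
       = (\<Sum>j\<le>m-d. real ((m-d) choose j) * p^j * (1-p)^(m-d-j))"
  proof -
    have "{d..m} = (\<lambda>j. j + d) ` {..m-d}" using assms(3)
      by (auto simp: image_iff) (metis add.commute atMost_iff diff_le_mono le_add_diff_inverse)
    then show ?thesis by (simp add: sum.reindex inj_on_def add.commute)
  qed
  also have "\<dots> = 1" using binsum[of p "m-d"] assms by (simp add: diff_diff_left)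
  finally show ?thesis by simp
qed

lemma L1:
  assumes "0 \<le> p0" "p0 \<le> 1" "0 \<le> pxor" "pxor \<le> 1"
  shows "pmf (check_msg_err dc pxor p0) True =
     (\<Sum>k\<le>dc-1. real ((dc-1) choose k) * p0^k * (1-p0)^(dc-1-k) * (if odd k then 1 - pxor else pxor))"
  unfolding check_msg_err_def
  apply (simp only: pmf_bind)
  apply (subst expectation_binomial_pmf')
  using assms apply simp
  apply (rule sum.cong[OF refl])
  using assms apply (simp add: pmf_bind pmf_return indicator_def)
  done

lemma L2:
  assumes "0 \<le> pc" "pc \<le> 1" "0 \<le> pmaj" "pmaj \<le> 1"
  shows "pmf (var_msg_err dv pmaj pc) True =
     (\<Sum>k\<le>dv-1. real ((dv-1) choose k) * pc^k * (1-pc)^(dv-1-k) *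
        (if k \<ge> (dv+1) div 2 then 1 - pmaj else if (dv-1)-k \<ge> (dv+1) div 2 then pmaj else 1/2))"
  unfolding var_msg_err_def
  apply (simp only: pmf_bind)
  apply (subst expectation_binomial_pmf')
  using assms apply simp
  apply (rule sum.cong[OF refl])
  using assms apply (simp add: pmf_bind pmf_return indicator_def Let_def)
  apply (auto simp: field_simps)
  done

lemma d_eq: "nat \<lceil>(real dv - 1) / 2\<rceil> = dv div 2"
proof (cases "even dv")
  case True
  then obtain j where j: "dv = 2*j" by blast
  have "\<lceil>(real dv - 1) / 2\<rceil> = int j" unfolding j
    by (subst ceiling_unique) auto
  then show ?thesis using j by simp
next
  case False
  then obtain j where j: "dv = 2*j+1" using oddE by blast
  have "\<lceil>(real dv - 1) / 2\<rceil> = int j" unfolding j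
    by (subst ceiling_unique) auto
  then show ?thesis using j by simp
qed

theorem lemma2:
  fixes dv dc dT :: nat and p0 pxor pmaj pand :: real
  assumes "dv \<ge> 4" and "dc \<ge> 2" and "dT \<ge> 2"
    and "0 \<le> p0" and "p0 \<le> 1"
    and "0 < pxor" and "pxor < 1/2"
    and "0 < pmaj" and "pmaj < 1/2"
    and "0 < pand" and "pand < 1/2"
    and "pmaj \<le> p_thr dv dc dT"
    and "pxor \<le> (real dT + 1) / real dc * p_thr dv dc dT"
    and "pand \<le> (real dT + 1) / real dT * p_thr dv dc dT"
    and "p0 < pxor + (real dT + 1) * p_thr dv dc dT"
  shows "pmaj < pe_dec dv dc pxor pmaj p0
       \<and> pe_dec dv dc pxor pmaj p0 \<le> pmaj + p_thr dv dc dT / real dT"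
proof -
  define P where "P = p_thr dv dc dT"
  define m where "m = dv - 1"
  define d where "d = dv div 2"
  define b where "b = (dv + 1) div 2"
  define C where "C = real (m choose (m div 2))"
  have d2: "d \<ge> 2" and dm: "d \<le> m" and mb: "b \<le> m" and db: "d \<le> b"
    using assms(1) unfolding d_def m_def b_def by auto
  have Cd: "real (m choose d) = C" unfolding C_def
  proof -
    have "m - d = m div 2" unfolding m_def d_def by arith
    then show "real (m choose d) = real (m choose (m div 2))"
      using binomial_symmetric[OF dm] by simp
  qed
  have C0: "C > 0" unfolding C_def by simp
  have Pdef: "P = C powr (- 1 / (real d - 1)) * real dc powr (- real d / (real d - 1))
      * real dT powr (- 1 / (real d - 1)) * (real dT + 1) powr (- real d / (real d - 1))"
    unfolding P_def p_thr_def Let_def d_eq C_def m_def d_def ..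
  have key: "C * real dc ^ d * (real dT + 1) ^ d * P ^ d = P / real dT" and P0: "P > 0"
    using pthr_alg[of C "real dc" "real dT" "real dT + 1" d] C0 assms(2,3) d2
    unfolding Pdef by auto
  define pc where "pc = pmf (check_msg_err dc pxor p0) True"
  have pc01: "0 \<le> pc" "pc \<le> 1" unfolding pc_def by (simp_all add: pmf_le_1)
  define n where "n = dc - 1"
  define B0 where "B0 k = real (n choose k) * p0^k * (1-p0)^(n-k)" for k
  have B0nn: "B0 k \<ge> 0" for k unfolding B0_def using assms(4,5) by simp
  have B0s: "(\<Sum>k\<le>n. B0 k) = 1" unfolding B0_def using binsum assms(4,5) by simp
  have pcs: "pc = (\<Sum>k\<le>n. B0 k * (if odd k then 1 - pxor else pxor))"
    unfolding pc_def B0_def n_def using L1 assms(4-7) by simp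
  have "pc \<ge> (\<Sum>k\<le>n. B0 k * pxor)"
    unfolding pcs by (rule sum_mono) (use B0nn assms(7) in \<open>auto intro: mult_left_mono\<close>)
  then have pcl: "pc \<ge> pxor" using B0s by (simp add: sum_distrib_right[symmetric])
  have "pc \<le> (\<Sum>k\<le>n. B0 k * (pxor + 1) - (if k = 0 then B0 k else 0))"
    unfolding pcs
  proof (rule sum_mono)
    fix k
    show "B0 k * (if odd k then 1 - pxor else pxor) \<le> B0 k * (pxor + 1) - (if k = 0 then B0 k else 0)"
      using B0nn[of k] assms(6,7)
      by (cases "k = 0") (auto intro: mult_left_mono simp: algebra_simps)
  qed
  also have "\<dots> = pxor + 1 - B0 0"
    by (simp add: sum_subtractf sum_distrib_right[symmetric] B0s)
  also have "B0 0 = (1 - p0) ^ n" unfolding B0_def by simp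
  finally have pcu0: "pc \<le> pxor + 1 - (1 - p0) ^ n" .
  have "(1 - p0) ^ n \<ge> 1 - real n * p0"
    using Bernoulli_inequality[of "-p0" n] assms(5) by simp
  with pcu0 have pcu: "pc \<le> pxor + real n * p0" by simp
  have n1: "real n = real dc - 1" unfolding n_def using assms(2) by simp
  have "real n * p0 < real n * (pxor + (real dT + 1) * P)"
    using assms(15) n1 assms(2) unfolding P_def by simp
  with pcu have "pc < pxor + real n * (pxor + (real dT + 1) * P)" by simp
  also have "\<dots> = real dc * pxor + real n * (real dT + 1) * P" unfolding n1 by (simp add: algebra_simps)
  also have "real dc * pxor \<le> (real dT + 1) * P"
    using assms(13) assms(2) unfolding P_def by (simp add: field_simps)
  finally have pcU: "pc < real dc * (real dT + 1) * P" using n1 by (simp add: algebra_simps)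
  have pc_pos: "pc > 0" using pcl assms(6) by simp
  define B where "B k = real (m choose k) * pc^k * (1-pc)^(m-k)" for k
  define Q where "Q k = (if k \<ge> b then 1 else if m - k \<ge> b then 0 else (1/2::real))" for k
  have Bnn: "B k \<ge> 0" for k unfolding B_def using pc01 by simp
  have Bs: "(\<Sum>k\<le>m. B k) = 1" unfolding B_def using binsum pc01 by simp
  define S where "S = (\<Sum>k\<le>m. B k * Q k)"
  have pe: "pe_dec dv dc pxor pmaj p0 = pmaj + (1 - 2*pmaj) * S"
  proof -
    have "pe_dec dv dc pxor pmaj p0 = (\<Sum>k\<le>m. B k *
        (if k \<ge> b then 1 - pmaj else if m-k \<ge> b then pmaj else 1/2))"
      unfolding pe_dec_def pc_def[symmetric] B_def m_def b_def
      using L2 pc01 assms(8,9) by simp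
    also have "\<dots> = (\<Sum>k\<le>m. pmaj * B k + (1 - 2*pmaj) * (B k * Q k))"
      by (rule sum.cong[OF refl]) (auto simp: Q_def algebra_simps)
    also have "\<dots> = pmaj + (1 - 2*pmaj) * S"
      unfolding S_def by (simp add: sum.distrib sum_distrib_left[symmetric] Bs)
    finally show ?thesis .
  qed
  have Qnn: "Q k \<ge> 0" for k unfolding Q_def by auto
  have "B m * Q m \<le> S" unfolding S_def
    by (rule member_le_sum) (use Bnn Qnn in auto)
  moreover have "B m * Q m = pc ^ m" unfolding B_def Q_def using mb by simp
  moreover have "pc ^ m > 0" using pc_pos by simp
  ultimately have Spos: "S > 0" by simp
  have "S \<le> (\<Sum>k\<le>m. (if d \<le> k then real (m choose k) * pc^k * (1-pc)^(m-k) else 0))"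
    unfolding S_def
  proof (rule sum_mono)
    fix k assume "k \<in> {..m}"
    have "Q k \<le> 1" unfolding Q_def by auto
    moreover have "k < d \<Longrightarrow> Q k = 0" unfolding Q_def d_def b_def m_def by auto
    ultimately show "B k * Q k \<le> (if d \<le> k then real (m choose k) * pc^k * (1-pc)^(m-k) else 0)"
      using Bnn[of k] unfolding B_def[symmetric]
      by (cases "d \<le> k") (auto intro: mult_left_le)
  qed
  also have "\<dots> \<le> C * pc ^ d" using tail[OF pc01 dm] Cd by simp
  also have "pc ^ d < (real dc * (real dT + 1) * P) ^ d"
    using power_strict_mono[OF pcU pc01(1)] d2 by simp
  then have "C * pc ^ d < C * (real dc * (real dT + 1) * P) ^ d" using C0 by simp
  also have "C * (real dc * (real dT + 1) * P) ^ d = P / real dT"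
    using key by (simp only: power_mult_distrib mult_ac)
  finally have SU: "S < P / real dT" .
  have "pmaj < pe_dec dv dc pxor pmaj p0" using pe Spos assms(9) by simp
  moreover have "pmaj * S \<ge> 0" using Spos assms(8) by simp
  then have "pe_dec dv dc pxor pmaj p0 \<le> pmaj + P / real dT"
    using pe SU by (simp add: algebra_simps)
  ultimately show ?thesis unfolding P_def by simp
qed

end
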